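(* For $i=1,2$ let $R_i$ be a unital ring whose additive group is torsion-free of rank $n$, and let $M_i\subseteq R_i^\times$ be a submonoid. Let $\mathcal L$ be a subgroup of $R_1$ of rank $n$, and assume that ${\rm span}_{\mathbb Z}(M_1)$ has finite index in $R_1$. If there are an injective additive group homomorphism $\mathfrak b\colon\mathbb Q\mathcal L\to\mathbb QR_2$ and a group homomorphism $\mathfrak t\colon\langle M_1\rangle\to\langle M_2\rangle$ such that $\mathfrak b(ax)=\mathfrak t(a)\mathfrak b(x)$ for all $a\in M_1$ and $x\in\mathbb Q\mathcal L$, then there is a unital $\mathbb Q$-algebra isomorphism $\varphi\colon\mathbb QR_1\to\mathbb QR_2$ with $\varphi|_{\langle M_1\rangle}=\mathfrak t$.
   Context: The rank of $R$ is $\dim_{\mathbb Q}\mathbb Q\otimes_{\mathbb Z}R$; $\mathbb QR=\mathbb Q\otimes_{\mathbb Z}R$ (an $n$-dimensional $\mathbb Q$-algebra containing $R$), and for a subgroup $\mathcal L\subseteq R$, $\mathbb Q\mathcal L=\mathbb Q\otimes\mathcal L\subseteq\mathbb QR$. $R^\times$ is the monoid of left regular elements of $R$ (those $a$ with $x\mapsto ax$ injective on $R$); these are invertible in $\mathbb QR$, and $\langle M\rangle$ denotes the subgroup of the unit group $(\mathbb QR)^*$ generated by $M$. *)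

theory Defs
  imports Complex_Main
begin

definition qalgebra :: "(rat \<Rightarrow> 'a::ring_1 \<Rightarrow> 'a) \<Rightarrow> bool" where
  "qalgebra s \<longleftrightarrow> Vector_Spaces.vector_space s \<and>
     (\<forall>c x y. s c (x * y) = s c x * y \<and> s c (x * y) = x * s c y)"

abbreviation qspan :: "(rat \<Rightarrow> 'a::ring_1 \<Rightarrow> 'a) \<Rightarrow> 'a set \<Rightarrow> 'a set" where
  "qspan s X \<equiv> module.span s X"

text \<open>rank of X := dim_Q (Q X) = dimension of its Q-span (finite, equal to n).\<close>
definition has_rank :: "(rat \<Rightarrow> 'a::ring_1 \<Rightarrow> 'a) \<Rightarrow> 'a set \<Rightarrow> nat \<Rightarrow> bool" where
  "has_rank s X n \<longleftrightarrow> (\<exists>B. B \<subseteq> qspan s X \<and> finite B \<and> \<not> module.dependent s B \<and>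
      qspan s B = qspan s X \<and> card B = n)"

definition add_subgroup :: "'a::ring_1 set \<Rightarrow> bool" where
  "add_subgroup L \<longleftrightarrow> 0 \<in> L \<and> (\<forall>x\<in>L. \<forall>y\<in>L. x + y \<in> L \<and> - x \<in> L)"

definition unital_subring :: "'a::ring_1 set \<Rightarrow> bool" where
  "unital_subring R \<longleftrightarrow> add_subgroup R \<and> 1 \<in> R \<and> (\<forall>x\<in>R. \<forall>y\<in>R. x * y \<in> R)"

text \<open>R is a ring whose additive group is torsion-free of finite rank n, realised
inside the Q-algebra QR = Q \<otimes> R, which is the ambient type (QR = Q-span of R).\<close>
definition tf_ring_in :: "(rat \<Rightarrow> 'a::ring_1 \<Rightarrow> 'a) \<Rightarrow> 'a set \<Rightarrow> nat \<Rightarrow> bool" where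
  "tf_ring_in s R n \<longleftrightarrow> qalgebra s \<and> unital_subring R \<and> qspan s R = UNIV \<and> has_rank s R n"

text \<open>Left regular elements R^\<times>.\<close>
definition left_regular :: "'a::ring_1 set \<Rightarrow> 'a set" where
  "left_regular R = {a \<in> R. \<forall>x\<in>R. \<forall>y\<in>R. a * x = a * y \<longrightarrow> x = y}"

definition submonoid :: "'a::ring_1 set \<Rightarrow> bool" where
  "submonoid M \<longleftrightarrow> 1 \<in> M \<and> (\<forall>x\<in>M. \<forall>y\<in>M. x * y \<in> M)"

definition zspan :: "'a::ring_1 set \<Rightarrow> 'a set" where
  "zspan M = {\<Sum>m\<in>F. of_int (c m) * m | F c. finite F \<and> F \<subseteq> M}"

definition finite_index :: "'a::ring_1 set \<Rightarrow> 'a set \<Rightarrow> bool" where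
  "finite_index S R \<longleftrightarrow> finite ((\<lambda>x. (\<lambda>y. x + y) ` S) ` R)"

inductive_set gen_group :: "'a::ring_1 set \<Rightarrow> 'a set" for M where
  one: "1 \<in> gen_group M"
| gen: "m \<in> M \<Longrightarrow> m \<in> gen_group M"
| inv: "m \<in> M \<Longrightarrow> m * b = 1 \<Longrightarrow> b * m = 1 \<Longrightarrow> b \<in> gen_group M"
| mult: "x \<in> gen_group M \<Longrightarrow> y \<in> gen_group M \<Longrightarrow> x * y \<in> gen_group M"

end

theory Submission
  imports Defs
begin

lemma scale_of_nat:
  assumes "module s"
  shows "s (of_nat k) x = (\<Sum>i<k. x)"
proof (induction k)
  case 0 then show ?case using module.scale_zero_left[OF assms] by simp
next
  case (Suc k)
  have "s (of_nat (Suc k)) x = s 1 x + s (of_nat k) x"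
    by (simp add: module.scale_left_distrib[OF assms] add.commute)
  then show ?case using Suc module.scale_one[OF assms] by (simp add: add.commute)
qed

lemma scale_of_int_mult:
  fixes s :: "rat \<Rightarrow> 'a::ring_1 \<Rightarrow> 'a"
  assumes "module s"
  shows "s (of_int k) x = of_int k * x"
proof -
  have N: "s (of_nat m) x = of_nat m * x" for m
    by (induction m) (simp_all add: module.scale_left_distrib[OF assms] module.scale_zero_left[OF assms] module.scale_one[OF assms] distrib_right add.commute)
  show ?thesis
  proof (cases "k \<ge> 0")
    case True then obtain m where "k = int m" by (metis nonneg_eq_int)
    then show ?thesis using N by simp
  next
    case False then obtain m where "k = - int m" by (metis le_cases neg_eq_iff_add_eq_0 nonneg_eq_int add.commute minus_minus neg_0_le_iff_le)
    then show ?thesis using N module.scale_minus_left[OF assms, of "of_nat m" x] by simp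
  qed
qed

lemma additive_int:
  assumes m1: "module s1" and m2: "module s2"
    and add: "\<And>x y. f (x + y) = f x + f y"
  shows "f (s1 (of_int k) x) = s2 (of_int k) (f x)"
proof -
  have z: "f 0 = 0" using add[of 0 0] by simp
  have neg: "f (- y) = - f y" for y using add[of y "- y"] z by (simp add: eq_neg_iff_add_eq_0 add.commute)
  have N: "f (s1 (of_nat m) x) = s2 (of_nat m) (f x)" for m
  proof (induction m)
    case 0 then show ?case using z module.scale_zero_left[OF m1] module.scale_zero_left[OF m2] by simp
  next
    case (Suc m)
    have a: "s1 (of_nat (Suc m)) x = x + s1 (of_nat m) x"
      by (simp add: module.scale_left_distrib[OF m1] module.scale_one[OF m1] add.commute)
    have b: "s2 (of_nat (Suc m)) (f x) = f x + s2 (of_nat m) (f x)"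
      by (simp add: module.scale_left_distrib[OF m2] module.scale_one[OF m2] add.commute)
    show ?case unfolding a b add Suc ..
  qed
  show ?thesis
  proof (cases "k \<ge> 0")
    case True then obtain m where "k = int m" by (metis nonneg_eq_int)
    then show ?thesis using N by simp
  next
    case False then obtain m where "k = - int m" by (metis le_cases neg_eq_iff_add_eq_0 nonneg_eq_int add.commute minus_minus neg_0_le_iff_le)
    then show ?thesis using N[of m] neg module.scale_minus_left[OF m1] module.scale_minus_left[OF m2] by simp
  qed
qed

lemma additive_linear:
  assumes m1: "module s1" and m2: "module (s2 :: rat \<Rightarrow> 'c::ab_group_add \<Rightarrow> 'c)"
    and add: "\<And>x y. f (x + y) = f x + f y"
  shows "f (s1 c x) = s2 c (f x)"
proof (cases c)
  case (Fract p q)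
  have c: "c = of_int p / of_int q" using Fract by (simp add: Fract_of_int_quotient)
  have qn: "(of_int q :: rat) \<noteq> 0" using Fract by simp
  let ?w = "s1 c x"
  have "s1 (of_int q) ?w = s1 (of_int p) x"
    using qn by (simp add: module.scale_scale[OF m1] c)
  then have "s2 (of_int q) (f ?w) = s2 (of_int p) (f x)"
    using additive_int[OF m1 m2 add] by metis
  then have "s2 (1 / of_int q) (s2 (of_int q) (f ?w)) = s2 (1 / of_int q) (s2 (of_int p) (f x))" by simp
  then show ?thesis using qn by (simp add: module.scale_scale[OF m2] module.scale_one[OF m2] c)
qed

theorem proposition5p1:
  fixes s1 :: "rat \<Rightarrow> 'a::ring_1 \<Rightarrow> 'a" and s2 :: "rat \<Rightarrow> 'b::ring_1 \<Rightarrow> 'b"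
    and R1 :: "'a set" and R2 :: "'b set" and n :: nat
    and M1 :: "'a set" and M2 :: "'b set" and L :: "'a set"
    and b :: "'a \<Rightarrow> 'b" and t :: "'a \<Rightarrow> 'b"
  assumes R1: "tf_ring_in s1 R1 n" and R2: "tf_ring_in s2 R2 n"
    and M1: "submonoid M1" "M1 \<subseteq> left_regular R1"
    and M2: "submonoid M2" "M2 \<subseteq> left_regular R2"
    and L: "add_subgroup L" "L \<subseteq> R1" "has_rank s1 L n"
    and idx: "finite_index (zspan M1) R1"
    and b_add: "\<forall>x\<in>qspan s1 L. \<forall>y\<in>qspan s1 L. b (x + y) = b x + b y"
    and b_inj: "inj_on b (qspan s1 L)"
    and t_maps: "t ` gen_group M1 \<subseteq> gen_group M2"
    and t_hom: "\<forall>x\<in>gen_group M1. \<forall>y\<in>gen_group M1. t (x * y) = t x * t y"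
    and bt: "\<forall>a\<in>M1. \<forall>x\<in>qspan s1 L. b (a * x) = t a * b x"
  shows "\<exists>\<phi> :: 'a \<Rightarrow> 'b. bij \<phi> \<and>
           (\<forall>x y. \<phi> (x + y) = \<phi> x + \<phi> y) \<and>
           (\<forall>c x. \<phi> (s1 c x) = s2 c (\<phi> x)) \<and>
           (\<forall>x y. \<phi> (x * y) = \<phi> x * \<phi> y) \<and>
           \<phi> 1 = 1 \<and>
           (\<forall>g\<in>gen_group M1. \<phi> g = t g)"
  proof -
  have q1: "qalgebra s1" and uR1: "unital_subring R1" and sp1: "qspan s1 R1 = UNIV"
    and hr1: "has_rank s1 R1 n" using R1 unfolding tf_ring_in_def by auto
  have q2: "qalgebra s2" and sp2: "qspan s2 R2 = UNIV"
    and hr2: "has_rank s2 R2 n" using R2 unfolding tf_ring_in_def by auto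
  have vs1: "vector_space s1" using q1 unfolding qalgebra_def by auto
  have vs2: "vector_space s2" using q2 unfolding qalgebra_def by auto
  have m1: "module s1" using vs1 module_iff_vector_space by blast
  have m2: "module s2" using vs2 module_iff_vector_space by blast
  have mul1: "\<And>c x y. s1 c (x*y) = s1 c x * y" using q1 unfolding qalgebra_def by auto
  have mul2: "\<And>c x y. s2 c (x*y) = s2 c x * y" using q2 unfolding qalgebra_def by auto
  obtain B1 where B1: "finite B1" "\<not> module.dependent s1 B1" "qspan s1 B1 = UNIV" "card B1 = n"
    using hr1 sp1 unfolding has_rank_def by auto
  obtain B2 where B2: "finite B2" "\<not> module.dependent s2 B2" "qspan s2 B2 = UNIV" "card B2 = n"
    using hr2 sp2 unfolding has_rank_def by auto
  interpret f1: finite_dimensional_vector_space s1 B1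
    using vs1 B1 by (simp add: finite_dimensional_vector_space_def finite_dimensional_vector_space_axioms_def)
  interpret f2: finite_dimensional_vector_space s2 B2
    using vs2 B2 by (simp add: finite_dimensional_vector_space_def finite_dimensional_vector_space_axioms_def)
  interpret fp: finite_dimensional_vector_space_pair s1 B1 s2 B2 by unfold_locales
  have d1: "f1.dim UNIV = n" using B1 by simp
  have d2: "f2.dim UNIV = n" using B2 by simp
  have spL: "qspan s1 L = UNIV"
  proof -
    obtain BL where BL: "BL \<subseteq> qspan s1 L" "finite BL" "\<not> module.dependent s1 BL"
      "qspan s1 BL = qspan s1 L" "card BL = n" using L(3) unfolding has_rank_def by auto
    have "UNIV \<subseteq> qspan s1 BL" using f1.card_eq_dim[of BL UNIV] BL d1 by auto
    then show ?thesis using BL by auto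
  qed
  have badd: "\<And>x y. b (x + y) = b x + b y" using b_add spL by auto
  have bsc: "\<And>c x. b (s1 c x) = s2 c (b x)" using additive_linear[OF m1 m2 badd] .
  have binj: "inj b" using b_inj spL by simp
  have b0: "b 0 = 0" using badd[of 0 0] by simp
  have linb: "Vector_Spaces.linear s1 s2 b"
    by (rule linear_module_homI) (simp add: module_hom_def module_hom_axioms_def m1 m2 badd bsc)
  have bsurj: "surj b" using fp.linear_injective_imp_surjective[OF linb binj] d1 d2 by simp
  then obtain u where u: "b u = 1" by (metis surjD)
  have zsp: "zspan M1 \<subseteq> qspan s1 M1"
  proof
    fix z assume "z \<in> zspan M1"
    then obtain F c where z: "z = (\<Sum>m\<in>F. of_int (c m) * m)" "F \<subseteq> M1" unfolding zspan_def by auto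
    have "z = (\<Sum>m\<in>F. s1 (of_int (c m)) m)" using z scale_of_int_mult[OF m1] by simp
    moreover have "(\<Sum>m\<in>F. s1 (of_int (c m)) m) \<in> qspan s1 M1"
      by (rule f1.span_sum, rule f1.span_scale, rule f1.span_base) (use z(2) in auto)
    ultimately show "z \<in> qspan s1 M1" by simp
  qed
  have R1sp: "x \<in> qspan s1 M1" if x: "x \<in> R1" for x
  proof -
    have ofn: "of_nat k \<in> R1" for k
      using uR1 by (induction k) (auto simp: unital_subring_def add_subgroup_def)
    have kx: "of_nat k * x \<in> R1" for k using uR1 ofn x unfolding unital_subring_def by auto
    define f where "f k = (\<lambda>y. of_nat k * x + y) ` zspan M1" for k :: nat
    have "range f \<subseteq> (\<lambda>x. (\<lambda>y. x + y) ` zspan M1) ` R1" using kx unfolding f_def by auto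
    then have "finite (range f)" using idx unfolding finite_index_def by (rule finite_subset)
    then have "\<not> inj f" using finite_imageD infinite_UNIV_nat by blast
    then obtain i j where ij: "i \<noteq> j" "f i = f j" unfolding inj_def by blast
    have "0 \<in> zspan M1" unfolding zspan_def by (rule CollectI, rule exI[of _ "{}"]) auto
    then have "of_nat i * x + 0 \<in> f i" unfolding f_def by (rule imageI)
    then have "of_nat i * x \<in> f j" using ij by simp
    then obtain z where z: "z \<in> zspan M1" "of_nat i * x = of_nat j * x + z" unfolding f_def by auto
    have "of_int (int i - int j) * x = z" using z(2) by (simp add: algebra_simps)
    then have e: "s1 (of_int (int i - int j)) x = z" unfolding scale_of_int_mult[OF m1] .
    have nz: "(of_int (int i - int j) :: rat) \<noteq> 0" using ij by simp
    have "x = s1 (1 / of_int (int i - int j)) z" unfolding e[symmetric] using nz by simp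
    then show ?thesis using z(1) zsp f1.span_scale by auto
  qed
  have spM: "qspan s1 M1 = UNIV"
    using f1.span_minimal[of R1 "qspan s1 M1"] R1sp sp1 f1.subspace_span by auto
  define T where "T y = b (y * u)" for y
  have Tadd: "T (x + y) = T x + T y" for x y unfolding T_def by (simp add: distrib_right badd)
  have Tsc: "T (s1 c y) = s2 c (T y)" for c y unfolding T_def by (simp add: mul1[symmetric] bsc)
  have M1sub: "M1 \<subseteq> gen_group M1" by (auto intro: gen_group.gen)
  have TM: "T a = t a" if "a \<in> M1" for a
    using bt that u unfolding T_def spL by simp
  have key: "b (y * x) = T y * b x" for y x
  proof -
    let ?P = "{y. \<forall>x. b (y * x) = T y * b x}"
    have "f1.subspace ?P"
    proof (rule f1.subspaceI)
      show "0 \<in> ?P" using b0 unfolding T_def by simp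
      show "y1 + y2 \<in> ?P" if "y1 \<in> ?P" "y2 \<in> ?P" for y1 y2
        using that by (simp add: distrib_right badd Tadd)
      show "s1 c y \<in> ?P" if "y \<in> ?P" for c y
        using that by (simp add: mul1[symmetric] bsc Tsc mul2[symmetric])
    qed
    moreover have "M1 \<subseteq> ?P" using bt spL TM by auto
    ultimately have "qspan s1 M1 \<subseteq> ?P" using f1.span_minimal by blast
    then show ?thesis using spM by auto
  qed
  have Tmul: "T (x * y) = T x * T y" for x y
    proof -
    have "T (x * y) = b (x * (y * u))" unfolding T_def by (simp add: mult.assoc)
    also have "\<dots> = T x * T y" unfolding key[of x "y * u"] T_def ..
    finally show ?thesis .
  qed
  have T1: "T 1 = 1" unfolding T_def using u by simp
  have Tinj: "inj T"
  proof (rule injI)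
    fix x y assume "T x = T y"
    then have "b x = b y" using key[of x 1] key[of y 1] by simp
    then show "x = y" using binj by (simp add: inj_eq)
  qed
  have linT: "Vector_Spaces.linear s1 s2 T"
    by (rule linear_module_homI) (simp add: module_hom_def module_hom_axioms_def m1 m2 Tadd Tsc)
  have Tsurj: "surj T" using fp.linear_injective_imp_surjective[OF linT Tinj] d1 d2 by simp
  have t1: "t 1 = 1" using TM[of 1] T1 M1(1) unfolding submonoid_def by simp
  have Tg: "T g = t g" if "g \<in> gen_group M1" for g
    using that
  proof (induction rule: gen_group.induct)
    case one then show ?case using T1 t1 by simp
  next
    case (gen m) then show ?case using TM by simp
  next
    case (inv m c)
    have mg: "m \<in> gen_group M1" using inv(1) by (rule gen_group.gen)
    have cg: "c \<in> gen_group M1" using inv by (rule gen_group.inv)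
    have tmc: "t m * t c = 1" using t_hom mg cg inv(2) t1 by metis
    have "T c = T c * (t m * t c)" using tmc by simp
    also have "\<dots> = (T c * T m) * t c" using TM[OF inv(1)] by (simp add: mult.assoc)
    also have "\<dots> = t c" using Tmul[of c m] inv(3) T1 by simp
    finally show ?case .
  next
    case (mult x y) then show ?case using Tmul t_hom by simp
  qed
  show ?thesis
    by (rule exI[of _ T]) (simp add: bij_def Tinj Tsurj Tadd Tsc Tmul T1 Tg)
qed

end
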